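(* Let $n$ be a positive integer and $i,k\in\{1,\ldots,n\}$. Suppose that $H\sim\text{Hyp}(n,i,k)$ satisfies (1) $\mathbb{E}(H) \in (1, \min\{i,k\} -2]$ and (2) $\frac{(n-i)(n-k)}{n}> 1$. Then \[ \mathbb{E}(|H-ik/n|) \ge \frac{e^{-1/8}}{2\sqrt{2}} \cdot \sqrt{\frac{n-1 }{n}} \cdot \sqrt{\text{Var}(H)}. \]
   Context: $\text{Hyp}(n,i,k)$ denotes the hypergeometric distribution: the number of black marbles in a sample without replacement of size $k$ from an urn with $i$ black and $n-i$ white marbles, i.e. $\mathbb{P}(H=j)=\binom{i}{j}\binom{n-i}{k-j}/\binom{n}{k}$. One has $\mathbb{E}(H)=ik/n$ and $\text{Var}(H)=k\cdot\frac{i}{n}\cdot\frac{n-i}{n}\cdot\frac{n-k}{n-1}$. *)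

theory Defs
  imports "HOL-Analysis.Analysis"
begin

text \<open>Probability mass function of Hyp(n,i,k): number of black marbles in a sample
 without replacement of size k from an urn with i black and n-i white marbles.\<close>
definition hyp_pmf :: "nat \<Rightarrow> nat \<Rightarrow> nat \<Rightarrow> nat \<Rightarrow> real" where
  "hyp_pmf n i k j = real ((i choose j) * ((n - i) choose (k - j))) / real (n choose k)"

text \<open>Expectation of g(H) for H ~ Hyp(n,i,k); the support is contained in {0..k}.\<close>
definition hyp_expect :: "nat \<Rightarrow> nat \<Rightarrow> nat \<Rightarrow> (real \<Rightarrow> real) \<Rightarrow> real" where
  "hyp_expect n i k g = (\<Sum>j=0..k. g (real j) * hyp_pmf n i k j)"

definition hyp_mean :: "nat \<Rightarrow> nat \<Rightarrow> nat \<Rightarrow> real" where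
  "hyp_mean n i k = hyp_expect n i k (\<lambda>x. x)"

definition hyp_var :: "nat \<Rightarrow> nat \<Rightarrow> nat \<Rightarrow> real" where
  "hyp_var n i k = hyp_expect n i k (\<lambda>x. (x - hyp_mean n i k)\<^sup>2)"

end

theory Submission
  imports Defs
begin


lemma shift_sum:
  fixes h :: "nat \<Rightarrow> nat"
  assumes "r \<le> k"
  shows "(\<Sum>j=0..k. if r \<le> j then h (j - r) else 0) = (\<Sum>l\<le>k - r. h l)"
proof -
  have "{0..k} = {0..<r} \<union> {r..k}" using assms by auto
  hence "(\<Sum>j=0..k. if r \<le> j then h (j - r) else 0) = (\<Sum>j\<in>{0..<r}. if r \<le> j then h (j - r) else 0) + (\<Sum>j\<in>{r..k}. if r \<le> j then h (j - r) else 0)"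
    by (simp add: sum.union_disjoint ivl_disj_int)
  also have "(\<Sum>j\<in>{0..<r}. if r \<le> j then h (j - r) else 0) = 0" by simp
  also have "(\<Sum>j\<in>{r..k}. if r \<le> j then h (j - r) else 0) = (\<Sum>j\<in>{r..k}. h (j - r))" by simp
  also have "\<dots> = (\<Sum>l\<in>{0..k-r}. h l)"
    using assms sum.shift_bounds_cl_nat_ivl[of "\<lambda>j. h (j - r)" 0 r "k-r"] by simp
  finally show ?thesis by (simp add: atLeast0AtMost)
qed

lemma sum_choose_r:
  assumes "r \<le> i" "r \<le> k" "i \<le> n" "k \<le> n"
  shows "(\<Sum>j=0..k. (j choose r) * ((i choose j) * ((n - i) choose (k - j))))
       = (i choose r) * ((n - r) choose (k - r))"
proof -
  have t: "(j choose r) * ((i choose j) * ((n - i) choose (k - j)))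
      = (i choose r) * (if r \<le> j then ((i - r) choose (j - r)) * ((n - i) choose ((k - r) - (j - r))) else 0)" for j
  proof (cases "r \<le> j")
    case True
    show ?thesis
    proof (cases "j \<le> i")
      case True
      with \<open>r \<le> j\<close> choose_mult[of r j i] show ?thesis by (simp add: algebra_simps)
    next
      case False
      hence "i - r < j - r" using \<open>r \<le> j\<close> assms by linarith
      have "i choose j = 0" "(i - r) choose (j - r) = 0" using False \<open>i - r < j - r\<close> by (auto simp: binomial_eq_0)
      then show ?thesis using \<open>r \<le> j\<close> by (simp only: mult_0 mult_0_right if_True)
    qed
  next
    case False then show ?thesis by simp
  qed
  have "(\<Sum>j=0..k. (j choose r) * ((i choose j) * ((n - i) choose (k - j))))
     = (i choose r) * (\<Sum>j=0..k. if r \<le> j then ((i - r) choose (j - r)) * ((n - i) choose ((k - r) - (j - r))) else 0)"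
    by (simp add: t sum_distrib_left)
  also have "(\<Sum>j=0..k. if r \<le> j then ((i - r) choose (j - r)) * ((n - i) choose ((k - r) - (j - r))) else 0)
     = (\<Sum>l\<le>k - r. ((i - r) choose l) * ((n - i) choose ((k - r) - l)))"
    using shift_sum[OF assms(2), of "\<lambda>l. ((i - r) choose l) * ((n - i) choose ((k - r) - l))"] by simp
  also have "\<dots> = (n - r) choose (k - r)" using vandermonde[of "i-r" "n-i" "k-r"] assms by simp
  finally show ?thesis .
qed

lemma rc1: "real (x choose 1) = real x" by simp

lemma rc2: "real (x choose 2) = real x * (real x - 1) / 2"
proof (induction x)
  case 0 then show ?case by simp
next
  case (Suc x)
  have "Suc x choose 2 = (x choose 1) + (x choose 2)"
    by (simp add: numeral_2_eq_2)
  then show ?case using Suc by (simp add: field_simps)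
qed

lemma rc3: "real (x choose 3) = real x * (real x - 1) * (real x - 2) / 6"
proof (induction x)
  case 0 then show ?case by simp
next
  case (Suc x)
  have "Suc x choose 3 = (x choose 2) + (x choose 3)"
    by (simp add: numeral_3_eq_3 numeral_2_eq_2)
  then show ?case using Suc rc2[of x] by (simp add: field_simps)
qed

lemma rc4: "real (x choose 4) = real x * (real x - 1) * (real x - 2) * (real x - 3) / 24"
proof (induction x)
  case 0 then show ?case by simp
next
  case (Suc x)
  have "Suc x choose 4 = (x choose 3) + (x choose 4)"
    by (simp add: numeral_3_eq_3 numeral_2_eq_2 eval_nat_numeral)
  then show ?case using Suc rc3[of x] by (simp add: field_simps)
qed

lemma fmom:
  assumes "r \<le> i" "r \<le> k" "i \<le> n" "k \<le> n"
  shows "(\<Sum>j=0..k. real (j choose r) * hyp_pmf n i k j) = real (i choose r) * real (k choose r) / real (n choose r)"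
proof -
  have nk: "real (n choose k) > 0" "real (n choose r) > 0" using assms by auto
  have "(\<Sum>j=0..k. real (j choose r) * hyp_pmf n i k j)
      = real (\<Sum>j=0..k. (j choose r) * ((i choose j) * ((n - i) choose (k - j)))) / real (n choose k)"
    unfolding hyp_pmf_def by (simp add: sum_divide_distrib)
  also have "\<dots> = real ((i choose r) * ((n - r) choose (k - r))) / real (n choose k)"
    using sum_choose_r[OF assms] by simp
  also have "\<dots> = real (i choose r) * real (k choose r) / real (n choose r)"
  proof -
    have "(n choose k) * (k choose r) = (n choose r) * ((n - r) choose (k - r))"
      using choose_mult[of r k n] assms by simp
    hence "real (n choose k) * real (k choose r) = real (n choose r) * real ((n - r) choose (k - r))"
      by (metis of_nat_mult)
    with nk show ?thesis by (simp add: field_simps)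
  qed
  finally show ?thesis .
qed

lemma alg_var:
  fixes N K M :: real
  assumes "N \<ge> 6"
  shows "2 * ((K*(K-1)/2)*(M*(M-1)/2)/(N*(N-1)/2)) + (1 - 2*(K*M/N))*(K*M/N) + (K*M/N)^2
         = K*(N-K)*M*(N-M)/(N^2*(N-1))"
  using assms by (simp add: field_simps power2_eq_square)

lemma alg_m4:
  fixes N K M mu vv T S2 S3 S4 :: real
  assumes "N \<ge> 6"
    and "mu = K*M/N"
    and "S2 = (K*(K-1)/2)*(M*(M-1)/2)/(N*(N-1)/2)"
    and "S3 = (K*(K-1)*(K-2)/6)*(M*(M-1)*(M-2)/6)/(N*(N-1)*(N-2)/6)"
    and "S4 = (K*(K-1)*(K-2)*(K-3)/24)*(M*(M-1)*(M-2)*(M-3)/24)/(N*(N-1)*(N-2)*(N-3)/24)"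
    and "vv = K*(N-K)*M*(N-M)/(N^2*(N-1))"
    and "T = ((N-1)*N*N*(N*(N+1)-6*(K*(N-K))-6*(M*(N-M)))+6*(K*(N-K)*(M*(N-M)))*(5*N-6))/(N*N*(N-1)*(N-2)*(N-3))"
  shows "24*S4+(36-24*mu)*S3+(14-24*mu+12*mu^2)*S2+(1-4*mu+6*mu^2-4*mu^3)*mu+mu^4 = 3 * vv^2+vv * T"
proof -
  have n: "N \<noteq> 0" "N - 1 \<noteq> 0" "N - 2 \<noteq> 0" "N - 3 \<noteq> 0" using assms(1) by auto
  define a2 where "a2 = K*(K-1)"
  define a3 where "a3 = K*(K-1)*(K-2)"
  define a4 where "a4 = K*(K-1)*(K-2)*(K-3)"
  define b2 where "b2 = M*(M-1)"
  define b3 where "b3 = M*(M-1)*(M-2)"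
  define b4 where "b4 = M*(M-1)*(M-2)*(M-3)"
  define d2 where "d2 = N*(N-1)"
  define d3 where "d3 = N*(N-1)*(N-2)"
  define d4 where "d4 = N*(N-1)*(N-2)*(N-3)"
  define P where "P = K*(N-K)*(M*(N-M))"
  define Br where "Br = (N-1)*N*N*(N*(N+1)-6*(K*(N-K))-6*(M*(N-M)))+6*(K*(N-K)*(M*(N-M)))*(5*N-6)"
  define e where "e = N^2*(N-1)"
  define f where "f = N*N*(N-1)*(N-2)*(N-3)"
  have d: "d2 \<noteq> 0" "d3 \<noteq> 0" "d4 \<noteq> 0" "e \<noteq> 0" "f \<noteq> 0"
    using n unfolding d2_def d3_def d4_def e_def f_def by auto
  have gen: "(x/c)*(y/c)/(z/c) = x*y/(c*z)" if "c \<noteq> 0" for x y z c :: real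
    using that by (cases "z = 0") (simp_all add: field_simps)
  have S2: "S2 = a2*b2/(2*d2)" unfolding assms(3) a2_def b2_def d2_def by (rule gen) simp
  have S3: "S3 = a3*b3/(6*d3)" unfolding assms(4) a3_def b3_def d3_def by (rule gen) simp
  have S4: "S4 = a4*b4/(24*d4)" unfolding assms(5) a4_def b4_def d4_def by (rule gen) simp
  have vv: "vv = P/e" unfolding assms(6) P_def e_def by (simp add: algebra_simps)
  have T: "T = Br/f" unfolding assms(7) Br_def f_def by simp
  define Dn where "Dn = N^4*(N-1)^2*(N-2)*(N-3)"
  have Dn: "Dn \<noteq> 0" using n unfolding Dn_def by simp
  have D4: "Dn = d4 * (N^3*(N-1))" unfolding Dn_def d4_def by algebra
  have D3: "Dn = N * d3 * (N^2*(N-1)*(N-3))" unfolding Dn_def d3_def by algebra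
  have D2: "Dn = N^2 * d2 * (N*(N-1)*(N-2)*(N-3))" unfolding Dn_def d2_def by algebra
  have D1: "Dn = N^4 * ((N-1)^2*(N-2)*(N-3))" unfolding Dn_def by algebra
  have De: "Dn = e * e * ((N-2)*(N-3))" unfolding Dn_def e_def by algebra
  have Df: "Dn = e * f" unfolding Dn_def e_def f_def by algebra
  have t4: "24*S4*Dn = a4*b4*(N^3*(N-1))"
    unfolding S4 D4 using d by simp
  have m3: "(36-24*mu)*N = 36*N-24*K*M" unfolding assms(2) using n by (simp add: field_simps)
  have t3: "(36-24*mu)*S3*Dn = (36*N-24*K*M)*a3*b3*(N^2*(N-1)*(N-3))/6"
    unfolding S3 D3 m3[symmetric] using d by (simp add: field_simps)
  have m2: "(14-24*mu+12*mu^2)*N^2 = 14*N^2-24*K*M*N+12*K^2*M^2" unfolding assms(2) using n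
    by (simp add: field_simps power2_eq_square)
  have t2: "(14-24*mu+12*mu^2)*S2*Dn = (14*N^2-24*K*M*N+12*K^2*M^2)*a2*b2*(N*(N-1)*(N-2)*(N-3))/2"
    unfolding S2 D2 m2[symmetric] using d by (simp add: field_simps)
  have m1: "(1-4*mu+6*mu^2-4*mu^3)*mu*N^4 = (N^3-4*K*M*N^2+6*K^2*M^2*N-4*K^3*M^3)*(K*M)" unfolding assms(2) using n
    by (simp add: field_simps power2_eq_square power3_eq_cube power4_eq_xxxx)
  have t1: "(1-4*mu+6*mu^2-4*mu^3)*mu*Dn = (N^3-4*K*M*N^2+6*K^2*M^2*N-4*K^3*M^3)*(K*M)*((N-1)^2*(N-2)*(N-3))"
    unfolding D1 m1[symmetric] by (simp add: algebra_simps)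
  have m0: "mu^4*N^4 = (K*M)^4" unfolding assms(2) using n by (simp add: field_simps)
  have t0: "mu^4*Dn = (K*M)^4*((N-1)^2*(N-2)*(N-3))"
    unfolding D1 m0[symmetric] by (simp add: algebra_simps)
  have r1: "3* vv^2*Dn = 3*P^2*((N-2)*(N-3))"
    unfolding vv De using d by (simp add: field_simps power2_eq_square)
  have r2: "vv*T*Dn = P*Br"
    unfolding vv T Df using d by (simp add: field_simps)
  have poly: "a4*b4*(N^3*(N-1))
     + (36*N-24*K*M)*a3*b3*(N^2*(N-1)*(N-3))/6
     + (14*N^2-24*K*M*N+12*K^2*M^2)*a2*b2*(N*(N-1)*(N-2)*(N-3))/2
     + (N^3-4*K*M*N^2+6*K^2*M^2*N-4*K^3*M^3)*(K*M)*((N-1)^2*(N-2)*(N-3))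
     + (K*M)^4*((N-1)^2*(N-2)*(N-3))
     = 3*P^2*((N-2)*(N-3)) + P*Br"
    unfolding a2_def a3_def a4_def b2_def b3_def b4_def P_def Br_def by algebra
  have "(24*S4+(36-24*mu)*S3+(14-24*mu+12*mu^2)*S2+(1-4*mu+6*mu^2-4*mu^3)*mu+mu^4) * Dn = (3 * vv^2+vv * T) * Dn"
  proof -
    have "(24*S4+(36-24*mu)*S3+(14-24*mu+12*mu^2)*S2+(1-4*mu+6*mu^2-4*mu^3)*mu+mu^4) * Dn
       = 24*S4*Dn + (36-24*mu)*S3*Dn + (14-24*mu+12*mu^2)*S2*Dn + (1-4*mu+6*mu^2-4*mu^3)*mu*Dn + mu^4*Dn"
      by (simp only: distrib_right)
    also have "\<dots> = a4*b4*(N^3*(N-1))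
     + (36*N-24*K*M)*a3*b3*(N^2*(N-1)*(N-3))/6
     + (14*N^2-24*K*M*N+12*K^2*M^2)*a2*b2*(N*(N-1)*(N-2)*(N-3))/2
     + (N^3-4*K*M*N^2+6*K^2*M^2*N-4*K^3*M^3)*(K*M)*((N-1)^2*(N-2)*(N-3))
     + (K*M)^4*((N-1)^2*(N-2)*(N-3))" by (simp only: t4 t3 t2 t1 t0)
    also have "\<dots> = 3*P^2*((N-2)*(N-3)) + P*Br" by (rule poly)
    also have "\<dots> = 3 * vv^2*Dn + vv*T*Dn" by (simp only: r1 r2)
    also have "\<dots> = (3 * vv^2+vv * T) * Dn" by (simp only: distrib_right)
    finally show ?thesis .
  qed
  with Dn show ?thesis by simp
qed

lemma key_ineq:
  fixes n :: nat and K M :: real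
  assumes "real n \<ge> 6" "K \<ge> 2" "real n - K \<ge> 2" "M \<ge> 2" "real n - M \<ge> 2"
    "K*M \<ge> real n" "(real n-K)*(real n-M) \<ge> real n" "K*(real n-M) \<ge> real n" "M*(real n-K) \<ge> real n"
  shows "(real n-1)*(real n)^2*((real n)^2+real n-6*(K*(real n-K))-6*(M*(real n-M)))
     \<le> K*(real n-K)*(M*(real n-M))*(5*(real n)^2-55*real n+66)"
proof -
  define N where "N = real n"
  define u where "u = K*(N-K)"
  define v where "v = M*(N-M)"
  define P where "P = u * v"
  have N6: "N \<ge> 6" using assms N_def by simp
  have A: "K*M \<ge> N" and B: "(N-K)*(N-M) \<ge> N" and C: "K*(N-M) \<ge> N" and D: "M*(N-K) \<ge> N"
    using assms unfolding N_def by auto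
  have PA: "P = (K*M)*((N-K)*(N-M))" unfolding P_def u_def v_def by (simp add: algebra_simps)
  have PC: "P = (K*(N-M))*(M*(N-K))" unfolding P_def u_def v_def by (simp add: algebra_simps)
  have p1: "P \<ge> (K*M)*N" unfolding PA using A B N6 by (intro mult_left_mono) auto
  have p2: "P \<ge> ((N-K)*(N-M))*N" unfolding PA using A B N6 by (subst mult.commute) (intro mult_left_mono, auto)
  have p3: "P \<ge> (K*(N-M))*N" unfolding PC using C D N6 by (intro mult_left_mono) auto
  have p4: "P \<ge> (M*(N-K))*N" unfolding PC using C D N6 by (subst mult.commute) (intro mult_left_mono, auto)
  have sumN: "K*M + (N-K)*(N-M) + K*(N-M) + M*(N-K) = N^2" by (simp add: algebra_simps power2_eq_square)
  have Plow: "4*P \<ge> N^3"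
  proof -
    have "4*P \<ge> (K*M + (N-K)*(N-M) + K*(N-M) + M*(N-K))*N" using p1 p2 p3 p4 by (simp add: algebra_simps)
    thus ?thesis unfolding sumN by (simp add: power2_eq_square power3_eq_cube)
  qed
  have u0: "u \<ge> 0" "v \<ge> 0" unfolding u_def v_def using assms N_def by auto
  have uh: "u \<le> N^2/4" unfolding u_def
  proof -
    have "(N - 2*K)^2 \<ge> 0" by simp
    thus "K*(N-K) \<le> N^2/4" by (simp add: algebra_simps power2_eq_square)
  qed
  have vh: "v \<le> N^2/4" unfolding v_def
  proof -
    have "(N - 2*M)^2 \<ge> 0" by simp
    thus "M*(N-M) \<le> N^2/4" by (simp add: algebra_simps power2_eq_square)
  qed
  have Phigh: "P \<le> N^4/16"
  proof -
    have "u * v \<le> (N^2/4)*(N^2/4)" using uh vh u0 by (intro mult_mono) auto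
    thus ?thesis unfolding P_def by (simp add: power2_eq_square power4_eq_xxxx)
  qed
  have ul: "u \<ge> 2*(N-2)"
  proof -
    have "(K-2)*(N-2-K) \<ge> 0" using assms N_def by simp
    thus ?thesis unfolding u_def by (simp add: algebra_simps)
  qed
  have vl: "v \<ge> 2*(N-2)"
  proof -
    have "(M-2)*(N-2-M) \<ge> 0" using assms N_def by simp
    thus ?thesis unfolding v_def by (simp add: algebra_simps)
  qed
  have L: "(N-1)*N^2*(N^2+N-6*u-6 * v) \<le> (N-1)*N^2*(N^2+N-24*(N-2))"
    using ul vl N6 by (intro mult_left_mono) auto
  have goal: "(N-1)*N^2*(N^2+N-24*(N-2)) \<le> P*(5*N^2-55*N+66)"
  proof (cases "5*N^2-55*N+66 \<ge> 0")
    case True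
    have "P*(5*N^2-55*N+66) \<ge> (N^3/4)*(5*N^2-55*N+66)" using Plow True by (intro mult_right_mono) auto
    moreover have "(N-1)*N^2*(N^2+N-24*(N-2)) \<le> (N^3/4)*(5*N^2-55*N+66)"
    proof -
      have "N*N \<ge> 6*N" using N6 by (intro mult_right_mono) auto
      hence s2: "N^2 \<ge> 6*N" by (simp add: power2_eq_square)
      have s3: "N^3 \<ge> 0" using N6 by simp
      have h: "N^3/4 + 41/4*N^2 - 109/2*N + 48 \<ge> 0" using s2 s3 N6 by linarith
      have "N^2 * (N^3/4 + 41/4*N^2 - 109/2*N + 48) \<ge> 0" using h by simp
      thus ?thesis by (simp add: algebra_simps power2_eq_square power3_eq_cube)
    qed
    ultimately show ?thesis by linarith
  next
    case False
    have "N < 10"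
    proof (rule ccontr)
      assume "\<not> N < 10"
      hence "(N-10)*(5*N-5) \<ge> 0" by simp
      with False show False by (simp add: algebra_simps power2_eq_square)
    qed
    hence "n < 10" unfolding N_def by simp
    moreover have "n \<ge> 6" using N6 N_def by simp
    ultimately have nc: "n = 6 \<or> n = 7 \<or> n = 8 \<or> n = 9" by auto
    have "P*(5*N^2-55*N+66) \<ge> (N^4/16)*(5*N^2-55*N+66)" using Phigh False by (intro mult_right_mono_neg) auto
    moreover have "(N-1)*N^2*(N^2+N-24*(N-2)) \<le> (N^4/16)*(5*N^2-55*N+66)"
      using nc unfolding N_def by (elim disjE) (simp_all add: power2_eq_square power4_eq_xxxx)
    ultimately show ?thesis by linarith
  qed
  have "(N-1)*N^2*(N^2+N-6*u-6 * v) \<le> P*(5*N^2-55*N+66)" using L goal by linarith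
  thus ?thesis unfolding N_def u_def v_def P_def .

qed

lemma pw2: "((x::real) - mu)^2 = 2*(x*(x-1)/2) + (1-2*mu)*x + mu^2"
  by algebra

lemma pw4: "((x::real)-mu)^4 = 24*(x*(x-1)*(x-2)*(x-3)/24) + (36-24*mu)*(x*(x-1)*(x-2)/6)
   + (14-24*mu+12*mu^2)*(x*(x-1)/2) + (1-4*mu+6*mu^2-4*mu^3)*x + mu^4"
  by algebra

lemma pw4q: "((x::real)-mu)^4 * q = 24*((x*(x-1)*(x-2)*(x-3)/24) * q) + (36-24*mu)*((x*(x-1)*(x-2)/6) * q)
   + (14-24*mu+12*mu^2)*((x*(x-1)/2) * q) + (1-4*mu+6*mu^2-4*mu^3)*(x * q) + mu^4 * (1 * q)"
  by algebra

lemma pw_holder: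
  fixes y s :: real
  assumes "s \<ge> 0"
  shows "3* s^2*y^2 \<le> 2* s^3*\<bar>y\<bar> + y^4"
proof -
  have "0 \<le> \<bar>y\<bar>*(\<bar>y\<bar>-s)^2*(\<bar>y\<bar>+2* s)" using assms by simp
  also have "\<bar>y\<bar>*(\<bar>y\<bar>-s)^2*(\<bar>y\<bar>+2* s) = \<bar>y\<bar>^4 - 3* s^2*\<bar>y\<bar>^2 + 2* s^3*\<bar>y\<bar>"
    by algebra
  finally show ?thesis by (simp add: power2_abs power4_eq_xxxx power2_eq_square[symmetric])
qed

theorem theorem4:
  fixes n i k :: nat
  assumes "n \<ge> 1" and "i \<in> {1..n}" and "k \<in> {1..n}"
    and "1 < hyp_mean n i k"
    and "hyp_mean n i k \<le> real (min i k) - 2"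
    and "real (n - i) * real (n - k) / real n > 1"
  shows "hyp_expect n i k (\<lambda>x. \<bar>x - real i * real k / real n\<bar>)
         \<ge> exp (-1/8) / (2 * sqrt 2) * sqrt ((real n - 1) / real n) * sqrt (hyp_var n i k)"
proof -
  define N where "N = real n"
  define K where "K = real i"
  define M where "M = real k"
  define mu where "mu = K*M/N"
  define p where "p = hyp_pmf n i k"
  define S where "S r = (\<Sum>j=0..k. real (j choose r) * p j)" for r
  have ik: "1 \<le> i" "i \<le> n" "1 \<le> k" "k \<le> n" using assms(2,3) by auto
  have Nn: "N \<ge> 1" using assms(1) N_def by simp
  have Sv: "S r = real (i choose r) * real (k choose r) / real (n choose r)" if "r \<le> i" "r \<le> k" for r
    unfolding S_def p_def using fmom[OF that ik(2) ik(4)] .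
  have S1: "S 1 = mu" using Sv[of 1] ik unfolding mu_def K_def M_def N_def by simp
  have S0: "S 0 = 1" using Sv[of 0] by simp
  have mean: "hyp_mean n i k = mu"
    using S1 unfolding hyp_mean_def hyp_expect_def S_def p_def by simp
  have h1: "1 < mu" using assms(4) mean by simp
  have h2: "mu \<le> real (min i k) - 2" using assms(5) mean by simp
  have mi: "min i k \<ge> 4" using h1 h2 by linarith
  hence i4: "i \<ge> 4" and k4: "k \<ge> 4" by auto
  have NK: "real (n - i) = N - K" and NM: "real (n - k) = N - M" using ik unfolding N_def K_def M_def by auto
  have Npos: "N > 0" using Nn by simp
  have hB: "(N-K)*(N-M) > N" using assms(6) Npos unfolding NK NM N_def[symmetric] by (simp add: field_simps)
  have ni2: "n - i \<ge> 2"
  proof (rule ccontr)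
    assume "\<not> n - i \<ge> 2"
    hence "N - K \<le> 1" unfolding NK[symmetric] by simp
    moreover have "N - K \<ge> 0" "N - M \<ge> 0" "N - M \<le> N" using ik unfolding N_def K_def M_def by auto
    ultimately have "(N-K)*(N-M) \<le> 1*N" by (intro mult_mono) auto
    with hB show False by simp
  qed
  have nk2: "n - k \<ge> 2"
  proof (rule ccontr)
    assume "\<not> n - k \<ge> 2"
    hence "N - M \<le> 1" unfolding NM[symmetric] by simp
    moreover have "N - M \<ge> 0" "N - K \<ge> 0" "N - K \<le> N" using ik unfolding N_def K_def M_def by auto
    ultimately have "(N-K)*(N-M) \<le> N*1" by (intro mult_mono) auto
    with hB show False by simp
  qed
  have K4: "K \<ge> 4" and M4: "M \<ge> 4" using i4 k4 unfolding K_def M_def by auto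
  have NK2: "N - K \<ge> 2" using ni2 NK by linarith
  have NM2: "N - M \<ge> 2" using nk2 NM by linarith
  have N6: "N \<ge> 6" using K4 NK2 by linarith
  have hA: "K*M \<ge> N" using h1 Npos unfolding mu_def by (simp add: field_simps)
  have muK: "mu \<le> K - 2" "mu \<le> M - 2" using h2 unfolding K_def M_def by auto
  have hC: "K*(N-M) \<ge> N"
  proof -
    have "K*M \<le> (K-2)*N" using muK(1) Npos unfolding mu_def by (simp add: field_simps)
    thus ?thesis using Npos by (simp add: algebra_simps)
  qed
  have hD: "M*(N-K) \<ge> N"
  proof -
    have "K*M \<le> (M-2)*N" using muK(2) Npos unfolding mu_def by (simp add: field_simps)
    thus ?thesis using Npos by (simp add: algebra_simps)
  qed
  have key: "(N-1)*N^2*(N^2+N-6*(K*(N-K))-6*(M*(N-M))) \<le> K*(N-K)*(M*(N-M))*(5*N^2-55*N+66)"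
    using key_ineq[of n K M] N6 K4 M4 NK2 NM2 hA hB hC hD unfolding N_def by simp

  define u where "u = K*(N-K)"
  define v where "v = M*(N-M)"
  define P where "P = K*(N-K)*(M*(N-M))"
  define vv where "vv = K*(N-K)*M*(N-M)/(N^2*(N-1))"
  define Br where "Br = (N-1)*N*N*(N*(N+1)-6*(K*(N-K))-6*(M*(N-M)))+6*(K*(N-K)*(M*(N-M)))*(5*N-6)"
  define f where "f = N*N*(N-1)*(N-2)*(N-3)"
  define T where "T = Br/f"
  have S2: "S 2 = (K*(K-1)/2)*(M*(M-1)/2)/(N*(N-1)/2)" using Sv[of 2] i4 k4 by (simp add: rc2 K_def M_def N_def)
  have S3: "S 3 = (K*(K-1)*(K-2)/6)*(M*(M-1)*(M-2)/6)/(N*(N-1)*(N-2)/6)" using Sv[of 3] i4 k4 by (simp add: rc3 K_def M_def N_def)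
  have S4: "S 4 = (K*(K-1)*(K-2)*(K-3)/24)*(M*(M-1)*(M-2)*(M-3)/24)/(N*(N-1)*(N-2)*(N-3)/24)" using Sv[of 4] i4 k4 by (simp add: rc4 K_def M_def N_def)
  have pnn: "p j \<ge> 0" for j unfolding p_def hyp_pmf_def by simp
  have var1: "hyp_var n i k = (\<Sum>j=0..k. (real j - mu)^2 * p j)"
    unfolding hyp_var_def hyp_expect_def mean p_def ..
  also have "\<dots> = (\<Sum>j=0..k. 2*(real (j choose 2) * p j) + (1-2*mu)*(real (j choose 1) * p j) + mu^2*(real (j choose 0) * p j))"
    by (rule sum.cong) (simp_all only: pw2[of "real j" mu for j] rc2 rc1, simp add: algebra_simps)
  also have "\<dots> = 2 * S 2 + (1-2*mu) * S 1 + mu^2 * S 0"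
    unfolding S_def by (simp add: sum.distrib sum_distrib_left)
  also have "\<dots> = vv" unfolding S2 S1 S0 vv_def mu_def using alg_var[OF N6, of K M] by simp
  finally have var: "hyp_var n i k = vv" .
  define m4 where "m4 = (\<Sum>j=0..k. (real j - mu)^4 * p j)"
  have "m4 = (\<Sum>j=0..k. 24*(real (j choose 4) * p j) + (36-24*mu)*(real (j choose 3) * p j)
       + (14-24*mu+12*mu^2)*(real (j choose 2) * p j) + (1-4*mu+6*mu^2-4*mu^3)*(real (j choose 1) * p j)
       + mu^4*(real (j choose 0) * p j))"
    unfolding m4_def by (rule sum.cong) (simp_all only: rc4 rc3 rc2 rc1 binomial_n_0 of_nat_1 pw4q)
  also have "\<dots> = 24 * S 4 + (36-24*mu) * S 3 + (14-24*mu+12*mu^2) * S 2 + (1-4*mu+6*mu^2-4*mu^3) * S 1 + mu^4 * S 0"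
    unfolding S_def by (simp add: sum.distrib sum_distrib_left)
  also have "\<dots> = 3 * vv^2 + vv * T"
    unfolding S1 S0 using alg_m4[OF N6 mu_def S2 S3 S4 vv_def] unfolding T_def Br_def f_def by simp
  finally have m4: "m4 = 3 * vv^2 + vv * T" .
  have Ppos: "P > 0" unfolding P_def using K4 M4 NK2 NM2 by simp
  have fpos: "f > 0" unfolding f_def using N6 by simp
  have vvP: "vv = P/(N^2*(N-1))" unfolding vv_def P_def by (simp add: algebra_simps)
  have vvpos: "vv > 0" unfolding vvP using Ppos N6 by simp
  have Br_le: "Br \<le> 5*P*((N-2)*(N-3))"
  proof -
    have "Br = (N-1)*N^2*(N^2+N-6*(K*(N-K))-6*(M*(N-M))) + 6*P*(5*N-6)"
      unfolding Br_def P_def by (simp add: algebra_simps power2_eq_square)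
    moreover have "P*(5*N^2-55*N+66) + 6*P*(5*N-6) = 5*P*((N-2)*(N-3))" by algebra
    ultimately show ?thesis using key unfolding P_def by linarith
  qed
  have T_le: "T \<le> 5 * vv"
  proof -
    have "T \<le> 5*P*((N-2)*(N-3))/f" unfolding T_def using Br_le fpos by (simp add: divide_right_mono)
    also have "\<dots> = 5 * vv"
    proof -
      have fe: "f = (N^2*(N-1))*((N-2)*(N-3))" unfolding f_def by algebra
      have "(N-2)*(N-3) \<noteq> 0" using N6 by simp
      thus ?thesis unfolding vvP fe by simp
    qed
    finally show ?thesis .
  qed
  have m4_le: "m4 \<le> 8 * vv^2"
  proof -
    have "vv * T \<le> vv * (5 * vv)" using T_le vvpos by (intro mult_left_mono) auto
    thus ?thesis unfolding m4 by (simp add: power2_eq_square)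
  qed
  define m1 where "m1 = (\<Sum>j=0..k. \<bar>real j - mu\<bar> * p j)"
  have lhs: "hyp_expect n i k (\<lambda>x. \<bar>x - real i * real k / real n\<bar>) = m1"
    unfolding hyp_expect_def m1_def mu_def p_def K_def M_def N_def ..
  define sg where "sg = sqrt vv"
  define w where "w = 2 * sqrt 2 * sg"
  have sgpos: "sg > 0" unfolding sg_def using vvpos by simp
  have wpos: "w > 0" unfolding w_def using sgpos by simp
  have w2: "w^2 = 8 * vv" unfolding w_def sg_def using vvpos by (simp add: power_mult_distrib)
  have "(\<Sum>j=0..k. 3 * w^2 * ((real j - mu)^2 * p j)) \<le> (\<Sum>j=0..k. 2 * w^3 * (\<bar>real j - mu\<bar> * p j) + (real j - mu)^4 * p j)"
  proof (rule sum_mono)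
    fix j
    have "3 * w^2 * (real j - mu)^2 \<le> 2 * w^3 * \<bar>real j - mu\<bar> + (real j - mu)^4"
      using pw_holder[of w "real j - mu"] wpos by simp
    hence "(3 * w^2 * (real j - mu)^2) * p j \<le> (2 * w^3 * \<bar>real j - mu\<bar> + (real j - mu)^4) * p j"
      using pnn by (intro mult_right_mono) auto
    thus "3 * w^2 * ((real j - mu)^2 * p j) \<le> 2 * w^3 * (\<bar>real j - mu\<bar> * p j) + (real j - mu)^4 * p j"
      by (simp add: algebra_simps)
  qed
  hence "3 * w^2 * vv \<le> 2 * w^3 * m1 + m4"
    unfolding var[symmetric] var1 m1_def m4_def by (simp add: sum.distrib sum_distrib_left)
  moreover have "m4 \<le> w^2 * vv" using m4_le unfolding w2 by (simp add: power2_eq_square)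
  ultimately have "3 * w^2 * vv \<le> 2 * w^3 * m1 + w^2 * vv" by linarith
  hence "w^2 * vv \<le> w^2 * (w * m1)" by (simp add: power2_eq_square power3_eq_cube algebra_simps)
  hence "vv \<le> w * m1" using wpos by (simp add: power2_eq_square)
  hence m1ge: "m1 \<ge> vv / w" using wpos by (simp add: field_simps)
  have vvw: "vv / w = sg / (2 * sqrt 2)"
    unfolding w_def using sgpos vvpos by (simp add: sg_def field_simps)
  have c1: "exp (-1/8::real) \<le> 1" by simp
  have c2: "sqrt ((real n - 1) / real n) \<le> 1" using Npos unfolding N_def by simp
  have "exp (-1/8) / (2 * sqrt 2) * sqrt ((real n - 1) / real n) * sqrt (hyp_var n i k)
      \<le> 1 / (2 * sqrt 2) * 1 * sg"
    unfolding var sg_def[symmetric] using c1 c2 sgpos assms(1)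
    by (intro mult_mono divide_right_mono) auto
  also have "\<dots> = vv / w" using vvw by simp
  also have "\<dots> \<le> m1" using m1ge .
  finally show ?thesis unfolding lhs .
qed

end
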